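(* Let $\mathbf{X}\in\mathbb{R}^{n\times d}$ with rows $\mathbf{X}_1,\ldots,\mathbf{X}_n$ and columns $\mathbf{X}_{\cdot 1},\ldots,\mathbf{X}_{\cdot d}$, let $u$ be a utility function, $\lambda>0$, and let $$\mathcal{P}_\lambda(\mathbf{w})=-\frac1n\sum_{j=1}^n u(\mathbf{w}^{\top}\mathbf{X}_j)+\lambda\|\mathbf{w}\|_1,\qquad\mathcal{D}_\lambda(\boldsymbol{\theta})=\frac1n\sum_{j=1}^n u^*(n\lambda\theta_j),$$ with feasible sets $\mathcal{C}_P=\mathrm{dom}(\mathcal{P}_\lambda)\cap\mathbb{R}^d_+$ and $\mathcal{C}_D=\mathrm{dom}(\mathcal{D}_\lambda)\cap\{\boldsymbol{\theta}:\|\phi(\mathbf{X}^{\top}\boldsymbol{\theta})\|_\infty\leq1\}$; let $\mathbf{w}^*$ minimize $\mathcal{P}_\lambda$ over $\mathcal{C}_P$ and $\boldsymbol{\theta}^*$ maximize $\mathcal{D}_\lambda$ over $\mathcal{C}_D$. Suppose $\mathcal{D}_\lambda$ is $\alpha$-strongly concave. Then for any $(\mathbf{w},\boldsymbol{\theta})\in\mathcal{C}_P\times\mathcal{C}_D$, $\boldsymbol{\theta}^*\in\mathcal{B}(\boldsymbol{\theta},r)$ with $r=\sqrt{2\,\mathrm{Gap}_\lambda(\mathbf{w},\boldsymbol{\theta})/\alpha}$. Furthermore, for each $j\in[d]$: if $\phi(\mathbf{X}_{\cdot j}^{\top}\boldsymbol{\theta})+r\|\mathbf{X}_{\cdot j}\|_2<1$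 then $w_j^*=0$.
   Context: A utility function is an increasing concave function $u$; $u^*(\theta)=\inf_z\{\theta z-u(z)\}$ is its conjugate as used in the Fenchel–Rockafellar dual of $\min_{\mathbf{w}\geq0}\mathcal{P}_\lambda(\mathbf{w})$. $\phi(x)=\max\{x,0\}$ entrywise; $\mathrm{Gap}_\lambda(\mathbf{w},\boldsymbol{\theta})=\mathcal{P}_\lambda(\mathbf{w})-\mathcal{D}_\lambda(\boldsymbol{\theta})$; $\mathcal{B}(\boldsymbol{\theta},r)$ is the closed Euclidean ball of radius $r$ centered at $\boldsymbol{\theta}$. *)

theory Defs
  imports "HOL-Analysis.Analysis"
begin

text \<open>Utility functions are extended-valued: u : real \<Rightarrow> real \<union> {-\<infinity>}
  (as e.g. the logarithmic utility). Concavity is the usual extended-valued one.\<close>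

definition ext_concave :: "(real \<Rightarrow> ereal) \<Rightarrow> bool" where
  "ext_concave u \<longleftrightarrow>
     (\<forall>x y t. 0 < t \<and> t < 1 \<longrightarrow>
        ereal t * u x + ereal (1 - t) * u y \<le> u (t * x + (1 - t) * y))"

definition utility :: "(real \<Rightarrow> ereal) \<Rightarrow> bool" where
  "utility u \<longleftrightarrow> mono u \<and> ext_concave u \<and> (\<forall>z. u z < \<infinity>) \<and> (\<exists>z. u z > - \<infinity>)"

definition uconj :: "(real \<Rightarrow> ereal) \<Rightarrow> real \<Rightarrow> ereal" where
  "uconj u \<theta> = (INF z. ereal (\<theta> * z) - u z)"

definition phi :: "real ^ 'd \<Rightarrow> real ^ 'd" where
  "phi v = (\<chi> i. max (v $ i) 0)"

definition l1norm :: "real ^ 'd \<Rightarrow> real" where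
  "l1norm w = (\<Sum>i\<in>UNIV. \<bar>w $ i\<bar>)"

text \<open>Rows of X (indexed by 'n, n = CARD('n)) are the samples X_j \<in> R^d.\<close>
definition primal_obj :: "real ^ 'd ^ 'n \<Rightarrow> (real \<Rightarrow> ereal) \<Rightarrow> real \<Rightarrow> real ^ 'd \<Rightarrow> ereal" where
  "primal_obj X u lam w =
     - (ereal (1 / real CARD('n)) * (\<Sum>j\<in>UNIV. u (w \<bullet> (X $ j)))) + ereal (lam * l1norm w)"

definition dual_obj :: "real ^ 'd ^ 'n \<Rightarrow> (real \<Rightarrow> ereal) \<Rightarrow> real \<Rightarrow> real ^ 'n \<Rightarrow> ereal" where
  "dual_obj X u lam \<theta> =
     ereal (1 / real CARD('n)) * (\<Sum>j\<in>UNIV. uconj u (real CARD('n) * lam * \<theta> $ j))"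

definition primal_feasible :: "real ^ 'd ^ 'n \<Rightarrow> (real \<Rightarrow> ereal) \<Rightarrow> real \<Rightarrow> (real ^ 'd) set" where
  "primal_feasible X u lam = {w. primal_obj X u lam w < \<infinity> \<and> (\<forall>i. 0 \<le> w $ i)}"

definition dual_feasible :: "real ^ 'd ^ 'n \<Rightarrow> (real \<Rightarrow> ereal) \<Rightarrow> real \<Rightarrow> (real ^ 'n) set" where
  "dual_feasible X u lam =
     {\<theta>. dual_obj X u lam \<theta> > - \<infinity> \<and> infnorm (phi (transpose X *v \<theta>)) \<le> 1}"

definition strongly_concave :: "real \<Rightarrow> ('a::real_normed_vector \<Rightarrow> ereal) \<Rightarrow> bool" where
  "strongly_concave \<alpha> D \<longleftrightarrow> 0 < \<alpha> \<and>
     (\<forall>a b t. 0 < t \<and> t < 1 \<longrightarrow>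
        ereal t * D a + ereal (1 - t) * D b + ereal (\<alpha> / 2 * t * (1 - t) * (norm (a - b))\<^sup>2)
          \<le> D (t *\<^sub>R a + (1 - t) *\<^sub>R b))"

definition gap :: "real ^ 'd ^ 'n \<Rightarrow> (real \<Rightarrow> ereal) \<Rightarrow> real \<Rightarrow> real ^ 'd \<Rightarrow> real ^ 'n \<Rightarrow> ereal" where
  "gap X u lam w \<theta> = primal_obj X u lam w - dual_obj X u lam \<theta>"

end

theory Submission
  imports Defs
begin

lemma slope_mono:
  fixes f :: "real \<Rightarrow> real"
  assumes conc: "\<And>x y t. 0 < t \<Longrightarrow> t < 1 \<Longrightarrow> t * f x + (1 - t) * f y \<le> f (t * x + (1 - t) * y)"
  assumes "y < y'" "y \<noteq> z" "y' \<noteq> z"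
  shows "(f y' - f z) / (y' - z) \<le> (f y - f z) / (y - z)"
proof -
  have cv: "convex_on UNIV (\<lambda>x. - f x)"
  proof (rule convex_onI)
    fix t x y :: real assume "0 < t" "t < 1"
    have "(1-t) * f x + (1 - (1-t)) * f y \<le> f ((1-t) * x + (1 - (1-t)) * y)"
      by (rule conc) (use \<open>0<t\<close> \<open>t<1\<close> in auto)
    then show "- f ((1 - t) *\<^sub>R x + t *\<^sub>R y) \<le> (1 - t) * - f x + t * - f y"
      by simp
  qed simp
  have S: "(f a - f b)/(a - b) \<ge> (f a - f c)/(a - c) \<and> (f a - f c)/(a - c) \<ge> (f b - f c)/(b - c)"
    if "a < b" "b < c" for a b c
  proof -
    have 1: "((- f a) - (- f b)) / (a - b) \<le> ((- f a) - (- f c)) / (a - c)"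
      and 2: "((- f a) - (- f c)) / (a - c) \<le> ((- f b) - (- f c)) / (b - c)"
      using convex_on_slope_le[OF cv _ _ that] by auto
    have e: "((- f p) - (- f q)) / (p - q) = - ((f p - f q)/(p - q))" for p q
      by (simp add: divide_simps)
    show ?thesis using 1 2 unfolding e by simp
  qed
  have sym: "(f p - f q)/(p - q) = (f q - f p)/(q - p)" for p q
    by (metis minus_diff_eq divide_minus_right minus_divide_left)
  consider "z < y" | "y < z \<and> z < y'" | "y' < z" using assms by linarith
  then show ?thesis
  proof cases
    case 1 thus ?thesis using S[of z y y'] assms sym by metis
  next
    case 2 thus ?thesis using S[of y z y'] assms sym by (metis order_trans)
  next
    case 3 thus ?thesis using S[of y y' z] assms sym by metis
  qed
qed

lemma concave_deriv:
  fixes f :: "real \<Rightarrow> real"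
  assumes conc: "\<And>x y t. 0 < t \<Longrightarrow> t < 1 \<Longrightarrow> t * f x + (1 - t) * f y \<le> f (t * x + (1 - t) * y)"
  assumes uniq: "\<And>g1 g2. (\<forall>y. f y \<le> f z + g1 * (y - z)) \<Longrightarrow> (\<forall>y. f y \<le> f z + g2 * (y - z)) \<Longrightarrow> g1 = g2"
  shows "\<exists>g. (f has_real_derivative g) (at z) \<and> (\<forall>y. f y \<le> f z + g * (y - z))"
proof -
  define sl where "sl y = (f y - f z) / (y - z)" for y
  have mono: "sl y' \<le> sl y" if "y < y'" "y \<noteq> z" "y' \<noteq> z" for y y'
    unfolding sl_def by (rule slope_mono[OF conc that])
  have eq: "f y - f z = sl y * (y - z)" if "y \<noteq> z" for y
    using that unfolding sl_def by simp
  define gp where "gp = Sup (sl ` {z<..})"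
  define gm where "gm = Inf (sl ` {..<z})"
  have bddA: "bdd_above (sl ` {z<..})"
    by (rule bdd_aboveI[of _ "sl (z - 1)"]) (auto intro: mono)
  have bddB: "bdd_below (sl ` {..<z})"
    by (rule bdd_belowI[of _ "sl (z + 1)"]) (auto intro: mono)
  have gp_up: "sl y \<le> gp" if "y > z" for y
    unfolding gp_def using bddA that by (auto intro: cSup_upper)
  have gp_lo: "gp \<le> sl y" if "y < z" for y
    unfolding gp_def using that by (auto intro!: cSup_least mono)
  have gm_lo: "gm \<le> sl y" if "y < z" for y
    unfolding gm_def using bddB that by (auto intro: cInf_lower)
  have gm_up: "sl y \<le> gm" if "y > z" for y
    unfolding gm_def using that by (auto intro!: cInf_greatest mono)
  have sgp: "\<forall>y. f y \<le> f z + gp * (y - z)"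
  proof
    fix y
    consider "y > z" | "y < z" | "y = z" by linarith
    then show "f y \<le> f z + gp * (y - z)"
    proof cases
      case 1 then show ?thesis using eq[of y] gp_up[OF 1] by (smt (verit) mult_right_mono)
    next
      case 2 then show ?thesis using eq[of y] gp_lo[OF 2]
        by (smt (verit) mult_right_mono_neg)
    qed simp
  qed
  have sgm: "\<forall>y. f y \<le> f z + gm * (y - z)"
  proof
    fix y
    consider "y > z" | "y < z" | "y = z" by linarith
    then show "f y \<le> f z + gm * (y - z)"
    proof cases
      case 1 then show ?thesis using eq[of y] gm_up[OF 1] by (smt (verit) mult_right_mono)
    next
      case 2 then show ?thesis using eq[of y] gm_lo[OF 2]
        by (smt (verit) mult_right_mono_neg)
    qed simp
  qed
  have gpm: "gp = gm" using uniq[OF sgp sgm] .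
  have "(sl \<midarrow>z\<rightarrow> gp)"
    unfolding LIM_eq
  proof (intro allI impI)
    fix r :: real assume r: "r > 0"
    have "gp - r < Sup (sl ` {z<..})" using r gp_def by simp
    then obtain y1 where y1: "y1 > z" "gp - r < sl y1"
      using less_cSup_iff[OF _ bddA] by auto
    have "Inf (sl ` {..<z}) < gp + r" using r gm_def gpm by simp
    then obtain y2 where y2: "y2 < z" "sl y2 < gp + r"
      using cInf_less_iff[OF _ bddB] by auto
    show "\<exists>s>0. \<forall>x. x \<noteq> z \<and> norm (x - z) < s \<longrightarrow> norm (sl x - gp) < r"
    proof (intro exI[of _ "min (y1 - z) (z - y2)"] conjI allI impI)
      show "min (y1 - z) (z - y2) > 0" using y1 y2 by simp
      fix x assume x: "x \<noteq> z \<and> norm (x - z) < min (y1 - z) (z - y2)"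
      show "norm (sl x - gp) < r"
      proof (cases "x > z")
        case True
        then have "x < y1" using x by auto
        then have "sl y1 \<le> sl x" using mono[of x y1] True y1 by auto
        then show ?thesis using gp_up[OF True] y1 by auto
      next
        case False
        then have "x < z" "y2 < x" using x by auto
        then have "sl x \<le> sl y2" using mono[of y2 x] y2 by auto
        then show ?thesis using gp_lo[OF \<open>x < z\<close>] y2 by auto
      qed
    qed
  qed
  then have "(f has_real_derivative gp) (at z)"
    unfolding has_field_derivative_iff sl_def .
  then show ?thesis using sgp by blast
qed

lemma uconj_lt_inf:
  assumes "utility u" shows "uconj u s < \<infinity>"
proof -
  obtain z0 where z0: "u z0 > - \<infinity>" using assms unfolding utility_def by auto
  have "u z0 < \<infinity>" using assms unfolding utility_def by auto
  then obtain r where r: "u z0 = ereal r" using z0 by (cases "u z0") auto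
  have "uconj u s \<le> ereal (s * z0) - u z0" unfolding uconj_def by (rule INF_lower) simp
  also have "\<dots> < \<infinity>" using r by simp
  finally show ?thesis .
qed

lemma uconj_shift:
  assumes "utility u" and a: "u a = - \<infinity>" and s1: "uconj u s1 = ereal p1" and "s1 \<le> s"
  shows "ereal (p1 + (s - s1) * a) \<le> uconj u s"
  unfolding uconj_def
proof (rule INF_greatest)
  fix y :: real
  have mono: "mono u" and fin: "u y < \<infinity>" using assms(1) unfolding utility_def by auto
  show "ereal (p1 + (s - s1) * a) \<le> ereal (s * y) - u y"
  proof (cases "u y")
    case (real r)
    have "y > a"
    proof (rule ccontr)
      assume "\<not> a < y" then have "y \<le> a" by simp
      then have "u y \<le> u a" using monoD[OF mono] by blast
      then show False using a real by simp
    qed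
    have "uconj u s1 \<le> ereal (s1 * y) - u y" unfolding uconj_def by (rule INF_lower) simp
    then have "p1 \<le> s1 * y - r" using s1 real by simp
    moreover have "(s - s1) * a \<le> (s - s1) * y" using \<open>y > a\<close> \<open>s1 \<le> s\<close> by (simp add: mult_left_mono)
    ultimately show ?thesis using real by (simp add: algebra_simps)
  qed (use fin in auto)
qed

lemma u_finite:
  assumes ut: "utility u" and bpos: "\<beta> > 0"
  and SC: "\<And>s1 s2 p1 p2. uconj u s1 = ereal p1 \<Longrightarrow> uconj u s2 = ereal p2 \<Longrightarrow>
      \<exists>p. uconj u ((s1+s2)/2) = ereal p \<and> (p1+p2)/2 + \<beta>*(s1-s2)^2 \<le> p"
  and s0: "uconj u s0 = ereal p0"
  shows "u z > - \<infinity>"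
proof (rule ccontr)
  assume "\<not> u z > - \<infinity>"
  then have a: "u z = - \<infinity>" by simp
  define U where "U s = real_of_ereal (uconj u s)" for s
  have fin: "uconj u s = ereal (U s)" if "s0 \<le> s" for s
  proof -
    have "ereal (p0 + (s - s0) * z) \<le> uconj u s" by (rule uconj_shift[OF ut a s0 that])
    moreover have "uconj u s < \<infinity>" by (rule uconj_lt_inf[OF ut])
    ultimately show ?thesis unfolding U_def by (cases "uconj u s") auto
  qed
  define V where "V s = U s - s * z" for s
  have Vmono: "V s \<le> V s'" if "s0 \<le> s" "s \<le> s'" for s s'
  proof -
    have "ereal (U s + (s' - s) * z) \<le> uconj u s'"
      by (rule uconj_shift[OF ut a fin[OF that(1)] that(2)])
    then show ?thesis using fin[of s'] that unfolding V_def by (simp add: algebra_simps)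
  qed
  have Vmid: "V s + V (s+2) + 8 * \<beta> \<le> 2 * V (s + 1)" if s: "s0 \<le> s" for s
  proof -
    obtain p where p: "uconj u ((s + (s+2))/2) = ereal p" "(U s + U (s+2))/2 + \<beta>*(s - (s+2))^2 \<le> p"
      using SC[OF fin[of s] fin[of "s+2"]] s by (auto simp del: times_divide_eq_left)
    have "(s + (s+2))/2 = s + 1" by simp
    moreover have "uconj u (s + 1) = ereal (U (s + 1))" using fin[of "s+1"] s by simp
    ultimately have "p = U (s+1)" using p(1) by (metis ereal.inject)
    moreover have "(U s + U (s+2))/2 + \<beta>*4 \<le> p" using p(2) by (simp add: power2_eq_square)
    ultimately have "U s + U (s+2) + 8 * \<beta> \<le> 2 * U (s+1)" by (simp add: field_simps)
    then show ?thesis unfolding V_def by (simp add: algebra_simps)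
  qed
  define d where "d m = V (s0 + real m + 1) - V (s0 + real m)" for m :: nat
  have dpos: "d m \<ge> 0" for m unfolding d_def using Vmono[of "s0 + real m" "s0 + real m + 1"] by simp
  have dstep: "d (Suc m) \<le> d m - 8 * \<beta>" for m
    using Vmid[of "s0 + real m"] unfolding d_def by (simp add: algebra_simps)
  have dind: "d m \<le> d 0 - 8 * \<beta> * real m" for m
  proof (induction m)
    case (Suc m) then show ?case using dstep[of m] by (simp add: algebra_simps)
  qed simp
  obtain m where m: "d 0 < real m * (8 * \<beta>)" using ex_less_of_nat_mult[of "8*\<beta>" "d 0"] bpos by auto
  show False using dind[of m] dpos[of m] m by (simp add: algebra_simps)
qed

lemma phi_feas_iff: "infnorm (phi (v :: real ^ 'd)) \<le> 1 \<longleftrightarrow> (\<forall>i. v $ i \<le> 1)"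
proof -
  have e: "{\<bar>phi v $ i\<bar> |i. i \<in> UNIV} = (\<lambda>i. max (v $ i) 0) ` UNIV"
    unfolding phi_def by auto
  have "infnorm (phi v) = Sup ((\<lambda>i. max (v $ i) 0) ` UNIV)"
    unfolding infnorm_cart e ..
  also have "\<dots> \<le> 1 \<longleftrightarrow> (\<forall>i. max (v $ i) 0 \<le> 1)"
    by (subst cSup_le_iff) (auto intro: bdd_above_finite)
  finally show ?thesis by simp
qed

lemma tmv_nth: "(transpose X *v (\<theta> :: real ^ 'n)) $ i = (\<Sum>k\<in>UNIV. X $ k $ i * \<theta> $ k)"
  by (simp add: matrix_vector_mult_def transpose_def)

lemma column_inner: "column j X \<bullet> (\<theta> :: real ^ 'n) = (transpose X *v \<theta>) $ j"
  unfolding tmv_nth by (simp add: column_def inner_vec_def mult.commute)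

lemma swap_sum: "(\<Sum>k\<in>UNIV. \<theta> $ k * (w \<bullet> (X $ k))) = (\<Sum>i\<in>UNIV. w $ i * (transpose X *v (\<theta> :: real ^ 'n)) $ i)"
  for w :: "real ^ 'd"
  unfolding tmv_nth by (simp add: inner_vec_def sum_distrib_left algebra_simps) (rule sum.swap)

lemma tmv_comb: "(transpose X *v (t *\<^sub>R a + (1 - t) *\<^sub>R (b :: real ^ 'n))) $ i
   = t * (transpose X *v a) $ i + (1 - t) * (transpose X *v b) $ i"
  unfolding tmv_nth sum_distrib_left sum.distrib[symmetric] by (rule sum.cong) (simp_all add: algebra_simps)

lemma l1norm_nonneg_eq: "(\<forall>i. 0 \<le> w $ i) \<Longrightarrow> l1norm w = (\<Sum>i\<in>UNIV. w $ i)"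
  unfolding l1norm_def by simp


theorem theorem4:
  fixes X :: "real ^ 'd ^ 'n" and u :: "real \<Rightarrow> ereal" and lam \<alpha> :: real
    and wstar w :: "real ^ 'd" and \<theta>star \<theta> :: "real ^ 'n"
  assumes "utility u" and "lam > 0"
    and "wstar \<in> primal_feasible X u lam"
    and "\<forall>v\<in>primal_feasible X u lam. primal_obj X u lam wstar \<le> primal_obj X u lam v"
    and "\<theta>star \<in> dual_feasible X u lam"
    and "\<forall>v\<in>dual_feasible X u lam. dual_obj X u lam v \<le> dual_obj X u lam \<theta>star"
    and "strongly_concave \<alpha> (dual_obj X u lam)"
    and "w \<in> primal_feasible X u lam" and "\<theta> \<in> dual_feasible X u lam"
  shows "\<theta>star \<in> cball \<theta> (sqrt (2 * real_of_ereal (gap X u lam w \<theta>) / \<alpha>))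
    \<and> (\<forall>j. max (column j X \<bullet> \<theta>) 0
              + sqrt (2 * real_of_ereal (gap X u lam w \<theta>) / \<alpha>) * norm (column j X) < 1
           \<longrightarrow> wstar $ j = 0)"
proof -
  note ut = assms(1) and lpos = assms(2) and sc = assms(7)
  have apos: "\<alpha> > 0" using sc unfolding strongly_concave_def by simp
  define N where "N = real CARD('n)"
  have Npos: "N > 0" unfolding N_def by simp
  define Uc where "Uc s = real_of_ereal (uconj u s)" for s
  define Dr where "Dr th = (1/N) * (\<Sum>k\<in>UNIV. Uc (N*lam*th$k))" for th :: "real ^ 'n"
  have dfin: "(\<forall>k. uconj u (N*lam*th$k) = ereal (Uc (N*lam*th$k))) \<and> dual_obj X u lam th = ereal (Dr th)"
    if th: "th \<in> dual_feasible X u lam" for th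
  proof -
    define F where "F k = uconj u (N*lam*th$k)" for k
    have Flt: "F k < \<infinity>" for k unfolding F_def by (rule uconj_lt_inf[OF ut])
    have dgt: "ereal (1/N) * (\<Sum>k\<in>UNIV. F k) > - \<infinity>"
      using th unfolding dual_feasible_def dual_obj_def F_def N_def by simp
    have Fgt: "F k > - \<infinity>" for k
    proof (rule ccontr)
      assume "\<not> F k > - \<infinity>"
      then have Fk: "F k = - \<infinity>" by simp
      have "(\<Sum>k\<in>UNIV. F k) = F k + (\<Sum>k\<in>UNIV - {k}. F k)"
        by (rule sum.remove) auto
      moreover have "(\<Sum>k\<in>UNIV - {k}. F k) \<noteq> \<infinity>"
        using Flt by (auto simp: sum_Pinfty)
      ultimately have "(\<Sum>k\<in>UNIV. F k) = - \<infinity>" using Fk by simp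
      then show False using dgt Npos by simp
    qed
    have Fe: "F k = ereal (Uc (N*lam*th$k))" for k
      using Flt[of k] Fgt[of k] unfolding F_def Uc_def by (cases "uconj u (N*lam*th$k)") auto
    have "dual_obj X u lam th = ereal (1/N) * (\<Sum>k\<in>UNIV. F k)"
      unfolding dual_obj_def F_def N_def by simp
    also have "\<dots> = ereal (Dr th)" unfolding Fe Dr_def by simp
    finally show ?thesis using Fe unfolding F_def by simp
  qed
  have dle: "(transpose X *v th) $ i \<le> 1" if "th \<in> dual_feasible X u lam" for th i
    using that phi_feas_iff unfolding dual_feasible_def by blast
  obtain k0 :: 'n where True by simp
  define \<beta> where "\<beta> = \<alpha> / (8 * N * lam^2)"
  have bpos: "\<beta> > 0" unfolding \<beta>_def using apos Npos lpos by simp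
  have SC1: "\<exists>p. uconj u ((s1+s2)/2) = ereal p \<and> (p1+p2)/2 + \<beta>*(s1-s2)^2 \<le> p"
    if s1: "uconj u s1 = ereal p1" and s2: "uconj u s2 = ereal p2" for s1 s2 p1 p2
  proof -
    define th where "th s = (\<chi> k. if k = k0 then s/(N*lam) else \<theta>star$k)" for s
    define A where "A = (\<Sum>k\<in>UNIV - {k0}. Uc (N*lam*\<theta>star$k))"
    have fin0: "uconj u (N*lam*\<theta>star$k) = ereal (Uc (N*lam*\<theta>star$k))" for k
      using dfin[OF assms(5)] by blast
    have Dth: "dual_obj X u lam (th s) = ereal (1/N) * (uconj u s + ereal A)" for s
    proof -
      have "(\<Sum>k\<in>UNIV. uconj u (real CARD('n) * lam * th s $ k))
          = uconj u (real CARD('n) * lam * th s $ k0) + (\<Sum>k\<in>UNIV - {k0}. uconj u (real CARD('n) * lam * th s $ k))"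
        by (rule sum.remove) auto
      also have "uconj u (real CARD('n) * lam * th s $ k0) = uconj u s"
        unfolding th_def N_def[symmetric] using Npos lpos by simp
      also have "(\<Sum>k\<in>UNIV - {k0}. uconj u (real CARD('n) * lam * th s $ k)) = (\<Sum>k\<in>UNIV - {k0}. ereal (Uc (N*lam*\<theta>star$k)))"
        by (rule sum.cong) (auto simp: th_def N_def[symmetric] fin0)
      also have "\<dots> = ereal A" unfolding A_def by simp
      finally show ?thesis unfolding dual_obj_def N_def by simp
    qed
    have mix: "(1/2) *\<^sub>R th s1 + (1 - 1/2) *\<^sub>R th s2 = th ((s1+s2)/2)"
      unfolding th_def using Npos lpos by (simp add: vec_eq_iff field_simps)
    have nrm: "(norm (th s1 - th s2))^2 = ((s1 - s2)/(N*lam))^2"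
    proof -
      have "(norm (th s1 - th s2))^2 = (\<Sum>k\<in>UNIV. ((th s1 - th s2)$k)^2)"
        unfolding power2_norm_eq_inner inner_vec_def by (simp add: power2_eq_square)
      also have "\<dots> = (\<Sum>k\<in>UNIV. if k = k0 then ((s1 - s2)/(N*lam))^2 else 0)"
        by (rule sum.cong) (auto simp: th_def diff_divide_distrib)
      finally show ?thesis by simp
    qed
    have "ereal (1/2) * dual_obj X u lam (th s1) + ereal (1 - 1/2) * dual_obj X u lam (th s2)
        + ereal (\<alpha> / 2 * (1/2) * (1 - 1/2) * (norm (th s1 - th s2))\<^sup>2)
        \<le> dual_obj X u lam ((1/2) *\<^sub>R th s1 + (1 - 1/2) *\<^sub>R th s2)"
      using sc unfolding strongly_concave_def by (metis (no_types) half_gt_zero less_numeral_extra(1) one_less_numeral_iff semiring_norm(76) field_sum_of_halves add_diff_cancel_left' less_add_same_cancel2)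
    then have ineq: "ereal ((1/2) * ((1/N) * (p1 + A)) + (1/2) * ((1/N) * (p2 + A)) + \<alpha>/8 * ((s1 - s2)/(N*lam))^2)
        \<le> ereal (1/N) * (uconj u ((s1+s2)/2) + ereal A)"
      unfolding mix Dth s1 s2 nrm by simp
    have "uconj u ((s1+s2)/2) < \<infinity>" by (rule uconj_lt_inf[OF ut])
    moreover have "uconj u ((s1+s2)/2) \<noteq> - \<infinity>" using ineq Npos by auto
    ultimately obtain p where p: "uconj u ((s1+s2)/2) = ereal p" by (cases "uconj u ((s1+s2)/2)") auto
    then have r: "(1/2) * ((1/N) * (p1 + A)) + (1/2) * ((1/N) * (p2 + A)) + \<alpha>/8 * ((s1 - s2)/(N*lam))^2 \<le> (1/N) * (p + A)"
      using ineq by simp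
    have "(p1+p2)/2 + \<beta>*(s1-s2)^2 = N * ((1/2) * ((1/N) * (p1 + A)) + (1/2) * ((1/N) * (p2 + A)) + \<alpha>/8 * ((s1 - s2)/(N*lam))^2) - A"
      unfolding \<beta>_def using Npos lpos by (simp add: field_simps power2_eq_square)
    also have "\<dots> \<le> N * ((1/N) * (p + A)) - A"
      using mult_left_mono[OF r, of N] Npos by linarith
    also have "\<dots> = p" using Npos by simp
    finally show ?thesis using p by blast
  qed
  have ufin: "u z > - \<infinity>" for z
    using u_finite[OF ut bpos SC1] dfin[OF assms(5)] by blast
  define f where "f z = real_of_ereal (u z)" for z
  have uf: "u z = ereal (f z)" for z
    using ufin[of z] ut unfolding utility_def f_def by (cases "u z") auto
  have conc: "t * f x + (1 - t) * f y \<le> f (t * x + (1 - t) * y)" if "0 < t" "t < 1" for x y t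
    using ut that unfolding utility_def ext_concave_def uf by auto
  have conj_eq: "uconj u g = ereal (g*z - f z)" if "\<forall>y. f y \<le> f z + g * (y - z)" for g z
    unfolding uconj_def
  proof (rule antisym)
    show "(INF y. ereal (g * y) - u y) \<le> ereal (g * z - f z)"
      by (rule order_trans[OF INF_lower[of z]]) (auto simp: uf)
    show "ereal (g * z - f z) \<le> (INF y. ereal (g * y) - u y)"
    proof (rule INF_greatest)
      fix y show "ereal (g * z - f z) \<le> ereal (g * y) - u y"
        using that[rule_format, of y] by (simp add: uf algebra_simps)
    qed
  qed
  have uniq: "g1 = g2" if g1: "\<forall>y. f y \<le> f z + g1 * (y - z)" and g2: "\<forall>y. f y \<le> f z + g2 * (y - z)" for z g1 g2
  proof -
    have gm: "\<forall>y. f y \<le> f z + ((g1+g2)/2) * (y - z)"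
    proof
      fix y show "f y \<le> f z + ((g1+g2)/2) * (y - z)"
        using g1[rule_format, of y] g2[rule_format, of y] by (simp add: field_simps)
    qed
    obtain p where p: "uconj u ((g1+g2)/2) = ereal p"
      "(g1*z - f z + (g2*z - f z))/2 + \<beta>*(g1-g2)^2 \<le> p"
      using SC1[OF conj_eq[OF g1] conj_eq[OF g2]] by blast
    have "p = (g1+g2)/2 * z - f z" using p(1) conj_eq[OF gm] by simp
    then have "\<beta>*(g1-g2)^2 \<le> 0" using p(2) by (simp add: field_simps)
    then have "(g1-g2)^2 \<le> 0" using bpos by (simp add: mult_le_0_iff)
    then show ?thesis by simp
  qed
  have "\<forall>z. \<exists>g. (f has_real_derivative g) (at z) \<and> (\<forall>y. f y \<le> f z + g * (y - z))"
  proof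
    fix z
    show "\<exists>g. (f has_real_derivative g) (at z) \<and> (\<forall>y. f y \<le> f z + g * (y - z))"
      by (rule concave_deriv) (rule conc, assumption+, rule uniq)
  qed
  then obtain G where G: "\<And>z. (f has_real_derivative G z) (at z)" "\<And>z y. f y \<le> f z + G z * (y - z)"
    by metis
  define Pr where "Pr v = - ((1/N) * (\<Sum>k\<in>UNIV. f (v \<bullet> (X $ k)))) + lam * l1norm v" for v :: "real ^ 'd"
  have pobj: "primal_obj X u lam v = ereal (Pr v)" for v
    unfolding primal_obj_def Pr_def N_def uf by simp
  have pfeas: "v \<in> primal_feasible X u lam" if "\<forall>i. 0 \<le> v $ i" for v
    using that unfolding primal_feasible_def pobj by simp
  have wsnn: "\<forall>i. 0 \<le> wstar $ i" using assms(3) unfolding primal_feasible_def by simp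
  have wnn: "\<forall>i. 0 \<le> w $ i" using assms(8) unfolding primal_feasible_def by simp
  have pmin: "Pr wstar \<le> Pr v" if "\<forall>i. 0 \<le> v $ i" for v
    using assms(4) pfeas[OF that] unfolding pobj by simp
  define z where "z k = wstar \<bullet> (X $ k)" for k
  define L where "L = (\<Sum>i\<in>UNIV. wstar $ i)"
  have PrL: "Pr wstar = - ((1/N) * (\<Sum>k\<in>UNIV. f (z k))) + lam * L"
    unfolding Pr_def z_def L_def l1norm_nonneg_eq[OF wsnn] ..
  (* scaling direction *)
  have KKTa: "(1/N) * (\<Sum>k\<in>UNIV. G (z k) * z k) = lam * L"
  proof -
    define psi where "psi t = - ((1/N) * (\<Sum>k\<in>UNIV. f ((1+t) * z k))) + lam * ((1+t) * L)" for t
    have dk: "((\<lambda>t. f ((1+t) * z k)) has_real_derivative G (z k) * z k) (at 0)" for k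
    proof -
      have "((\<lambda>t. (1+t) * z k) has_real_derivative z k) (at 0)"
        by (auto intro!: derivative_eq_intros)
      from DERIV_chain2[OF G(1) this] show ?thesis by simp
    qed
    have ds: "((\<lambda>t. \<Sum>k\<in>UNIV. f ((1+t) * z k)) has_real_derivative (\<Sum>k\<in>UNIV. G (z k) * z k)) (at 0)"
      by (rule DERIV_sum) (rule dk)
    have dpsi: "(psi has_real_derivative (- ((1/N) * (\<Sum>k\<in>UNIV. G (z k) * z k)) + lam * L)) (at 0)"
      unfolding psi_def using Npos by (auto intro!: derivative_eq_intros dk)
    have "\<forall>y. \<bar>0 - y\<bar> < 1 \<longrightarrow> psi 0 \<le> psi y"
    proof (intro allI impI)
      fix y :: real assume "\<bar>0 - y\<bar> < 1"
      then have y: "0 \<le> 1 + y" by simp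
      have "psi y = Pr ((1+y) *\<^sub>R wstar)"
        unfolding psi_def Pr_def z_def l1norm_def L_def using y
        by (simp add: abs_mult sum_distrib_left wsnn)
      moreover have "psi 0 = Pr wstar" unfolding psi_def PrL by simp
      moreover have "Pr wstar \<le> Pr ((1+y) *\<^sub>R wstar)" by (rule pmin) (use y wsnn in simp)
      ultimately show "psi 0 \<le> psi y" by simp
    qed
    from DERIV_local_min[OF dpsi _ this] show ?thesis by simp
  qed
  have KKTb: "(1/N) * (\<Sum>k\<in>UNIV. G (z k) * X $ k $ j) \<le> lam" for j
  proof (rule ccontr)
    assume neg: "\<not> ?thesis"
    define psi where "psi t = - ((1/N) * (\<Sum>k\<in>UNIV. f (z k + t * X $ k $ j))) + lam * (L + t)" for t
    have dk: "((\<lambda>t. f (z k + t * X $ k $ j)) has_real_derivative G (z k) * X $ k $ j) (at 0)" for k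
    proof -
      have "((\<lambda>t. z k + t * X $ k $ j) has_real_derivative X $ k $ j) (at 0)"
        by (auto intro!: derivative_eq_intros)
      from DERIV_chain2[OF G(1) this] show ?thesis by simp
    qed
    have ds: "((\<lambda>t. \<Sum>k\<in>UNIV. f (z k + t * X $ k $ j)) has_real_derivative (\<Sum>k\<in>UNIV. G (z k) * X $ k $ j)) (at 0)"
      by (rule DERIV_sum) (rule dk)
    have dpsi: "(psi has_real_derivative (- ((1/N) * (\<Sum>k\<in>UNIV. G (z k) * X $ k $ j)) + lam)) (at 0)"
      unfolding psi_def using Npos by (auto intro!: derivative_eq_intros dk)
    obtain d where d: "d > 0" "\<forall>h>0. h < d \<longrightarrow> psi 0 > psi (0 + h)"
      using DERIV_neg_dec_right[OF dpsi] neg by auto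
    define h where "h = d/2"
    have h: "h > 0" "h < d" using d unfolding h_def by auto
    have vnn: "\<forall>i. 0 \<le> (wstar + h *\<^sub>R axis j 1) $ i"
      using wsnn h by (simp add: axis_def)
    have "psi h = Pr (wstar + h *\<^sub>R axis j 1)"
    proof -
      have "(wstar + h *\<^sub>R axis j 1) \<bullet> (X $ k) = z k + h * X $ k $ j" for k
        unfolding z_def by (simp add: inner_add_left inner_axis')
      moreover have "l1norm (wstar + h *\<^sub>R axis j 1) = L + h"
      proof -
        have e: "(wstar + h *\<^sub>R axis j 1) $ i = wstar $ i + (if i = j then h else 0)" for i
          by (simp add: axis_def)
        show ?thesis unfolding l1norm_nonneg_eq[OF vnn] L_def e sum.distrib by simp
      qed
      ultimately show ?thesis unfolding psi_def Pr_def by simp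
    qed
    moreover have "psi 0 = Pr wstar" unfolding psi_def PrL by simp
    ultimately have "psi 0 \<le> psi h" using pmin[OF vnn] by simp
    then show False using d(2) h by auto
  qed
  have wd: "Dr th \<le> lam * (\<Sum>i\<in>UNIV. v $ i * (transpose X *v th) $ i) - (1/N) * (\<Sum>k\<in>UNIV. f (v \<bullet> (X $ k)))"
    if th: "th \<in> dual_feasible X u lam" for th v
  proof -
    have "Uc (N*lam*th$k) \<le> N*lam*th$k * (v \<bullet> (X $ k)) - f (v \<bullet> (X $ k))" for k
    proof -
      have "uconj u (N*lam*th$k) \<le> ereal (N*lam*th$k * (v \<bullet> (X $ k))) - u (v \<bullet> (X $ k))"
        unfolding uconj_def by (rule INF_lower) simp
      then show ?thesis using dfin[OF th] uf by (metis ereal_minus(1) ereal_less_eq(3))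
    qed
    then have "(\<Sum>k\<in>UNIV. Uc (N*lam*th$k)) \<le> (\<Sum>k\<in>UNIV. N*lam*th$k * (v \<bullet> (X $ k)) - f (v \<bullet> (X $ k)))"
      by (rule sum_mono)
    also have "\<dots> = N*lam*(\<Sum>k\<in>UNIV. th$k * (v \<bullet> (X $ k))) - (\<Sum>k\<in>UNIV. f (v \<bullet> (X $ k)))"
      by (simp add: sum_subtractf sum_distrib_left mult.assoc)
    also have "\<dots> = N*lam*(\<Sum>i\<in>UNIV. v $ i * (transpose X *v th) $ i) - (\<Sum>k\<in>UNIV. f (v \<bullet> (X $ k)))"
      by (simp add: swap_sum)
    finally have "(1/N) * (\<Sum>k\<in>UNIV. Uc (N*lam*th$k)) \<le> (1/N) * (N*lam*(\<Sum>i\<in>UNIV. v $ i * (transpose X *v th) $ i) - (\<Sum>k\<in>UNIV. f (v \<bullet> (X $ k))))"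
      using Npos by (intro mult_left_mono) auto
    then show ?thesis unfolding Dr_def using Npos by (simp add: field_simps)
  qed
  have wd2: "Dr th \<le> Pr v" if th: "th \<in> dual_feasible X u lam" and v: "\<forall>i. 0 \<le> v $ i" for th v
  proof -
    have "(\<Sum>i\<in>UNIV. v $ i * (transpose X *v th) $ i) \<le> (\<Sum>i\<in>UNIV. v $ i)"
      by (rule sum_mono) (use v dle[OF th] in \<open>simp add: mult_left_le\<close>)
    then have "lam * (\<Sum>i\<in>UNIV. v $ i * (transpose X *v th) $ i) \<le> lam * l1norm v"
      unfolding l1norm_nonneg_eq[OF v] using lpos by simp
    then show ?thesis using wd[OF th, of v] unfolding Pr_def by simp
  qed
  (* dual certificate *)
  define th where "th = (\<chi> k. G (z k) / (N * lam))"
  have thc: "uconj u (N*lam*th$k) = ereal (G (z k) * z k - f (z k))" for k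
  proof -
    have "N*lam*th$k = G (z k)" unfolding th_def using Npos lpos by simp
    then show ?thesis using conj_eq[of "z k" "G (z k)"] G(2) by simp
  qed
  have dth: "dual_obj X u lam th = ereal ((1/N) * (\<Sum>k\<in>UNIV. G (z k) * z k - f (z k)))"
    unfolding dual_obj_def N_def[symmetric] thc by simp
  have thfeas: "th \<in> dual_feasible X u lam"
    unfolding dual_feasible_def phi_feas_iff
  proof (intro CollectI conjI allI)
    show "dual_obj X u lam th > - \<infinity>" unfolding dth by simp
    fix i
    have "(transpose X *v th) $ i = (1/(N*lam)) * (\<Sum>k\<in>UNIV. G (z k) * X $ k $ i)"
      unfolding tmv_nth th_def by (simp add: sum_distrib_left field_simps)
    also have "\<dots> = (1/lam) * ((1/N) * (\<Sum>k\<in>UNIV. G (z k) * X $ k $ i))" by simp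
    also have "\<dots> \<le> (1/lam) * lam" using KKTb[of i] lpos by (intro mult_left_mono) auto
    finally show "(transpose X *v th) $ i \<le> 1" using lpos by simp
  qed
  have "dual_obj X u lam th \<le> dual_obj X u lam \<theta>star" using assms(6) thfeas by blast
  then have "(1/N) * (\<Sum>k\<in>UNIV. G (z k) * z k - f (z k)) \<le> Dr \<theta>star"
    unfolding dth using dfin[OF assms(5)] by simp
  moreover have "(1/N) * (\<Sum>k\<in>UNIV. G (z k) * z k - f (z k)) = Pr wstar"
    unfolding PrL sum_subtractf right_diff_distrib KKTa by simp
  ultimately have strong: "Pr wstar \<le> Dr \<theta>star" by simp
  define vs where "vs = transpose X *v \<theta>star"
  have "Pr wstar \<le> lam * (\<Sum>i\<in>UNIV. wstar $ i * vs $ i) - (1/N) * (\<Sum>k\<in>UNIV. f (z k))"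
    using strong wd[OF assms(5), of wstar] unfolding vs_def z_def by simp
  then have "lam * L \<le> lam * (\<Sum>i\<in>UNIV. wstar $ i * vs $ i)" unfolding PrL by simp
  then have "L \<le> (\<Sum>i\<in>UNIV. wstar $ i * vs $ i)" using lpos by simp
  then have "(\<Sum>i\<in>UNIV. wstar $ i * (1 - vs $ i)) \<le> 0"
    unfolding L_def by (simp add: right_diff_distrib sum_subtractf)
  moreover have nn: "\<forall>i\<in>UNIV. 0 \<le> wstar $ i * (1 - vs $ i)"
    using wsnn dle[OF assms(5)] unfolding vs_def by simp
  ultimately have "(\<Sum>i\<in>UNIV. wstar $ i * (1 - vs $ i)) = 0"
    by (meson antisym sum_nonneg)
  then have cs: "wstar $ i * (1 - vs $ i) = 0" for i using sum_nonneg_eq_0_iff[of UNIV "\<lambda>i. wstar $ i * (1 - vs $ i)"] nn by simp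
  have dth0: "dual_obj X u lam \<theta> = ereal (Dr \<theta>)" using dfin[OF assms(9)] by blast
  have dths: "dual_obj X u lam \<theta>star = ereal (Dr \<theta>star)" using dfin[OF assms(5)] by blast
  define G0 where "G0 = Pr w - Dr \<theta>"
  have gapr: "real_of_ereal (gap X u lam w \<theta>) = G0"
    unfolding gap_def pobj dth0 G0_def by simp
  define K where "K = \<alpha> / 2 * (norm (\<theta> - \<theta>star))^2"
  have Kt: "(1 - t) * K \<le> Dr \<theta>star - Dr \<theta>" if t: "0 < t" "t < 1" for t
  proof -
    define m where "m = t *\<^sub>R \<theta> + (1 - t) *\<^sub>R \<theta>star"
    have "ereal t * dual_obj X u lam \<theta> + ereal (1 - t) * dual_obj X u lam \<theta>star
        + ereal (\<alpha> / 2 * t * (1 - t) * (norm (\<theta> - \<theta>star))\<^sup>2) \<le> dual_obj X u lam m"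
      using sc t unfolding strongly_concave_def m_def by blast
    then have ineq: "ereal (t * Dr \<theta> + (1 - t) * Dr \<theta>star + \<alpha> / 2 * t * (1 - t) * (norm (\<theta> - \<theta>star))\<^sup>2)
        \<le> dual_obj X u lam m" unfolding dth0 dths by simp
    have mfeas: "m \<in> dual_feasible X u lam"
      unfolding dual_feasible_def phi_feas_iff
    proof (intro CollectI conjI allI)
      show "dual_obj X u lam m > - \<infinity>" using ineq by (metis MInfty_neq_ereal(2) ereal_infty_less_eq(2) less_ereal.simps(4) linorder_not_le)
      fix i
      have "(transpose X *v m) $ i = t * (transpose X *v \<theta>) $ i + (1 - t) * (transpose X *v \<theta>star) $ i"
        unfolding m_def by (rule tmv_comb)
      also have "\<dots> \<le> t * 1 + (1 - t) * 1"
        using dle[OF assms(9), of i] dle[OF assms(5), of i] t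
        by (intro add_mono mult_left_mono) auto
      finally show "(transpose X *v m) $ i \<le> 1" by simp
    qed
    have "dual_obj X u lam m \<le> ereal (Dr \<theta>star)" using assms(6) mfeas dths by metis
    with ineq have "ereal (t * Dr \<theta> + (1 - t) * Dr \<theta>star + \<alpha> / 2 * t * (1 - t) * (norm (\<theta> - \<theta>star))\<^sup>2) \<le> ereal (Dr \<theta>star)"
      by (rule order_trans)
    then have i2: "t * Dr \<theta> + (1 - t) * Dr \<theta>star + \<alpha> / 2 * t * (1 - t) * (norm (\<theta> - \<theta>star))\<^sup>2 \<le> Dr \<theta>star"
      by simp
    have "\<alpha> / 2 * t * (1 - t) * (norm (\<theta> - \<theta>star))\<^sup>2 = t * ((1 - t) * K)"
      unfolding K_def by (simp add: algebra_simps)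
    with i2 have "t * Dr \<theta> + (1 - t) * Dr \<theta>star + t * ((1 - t) * K) \<le> Dr \<theta>star"
      by linarith
    then have "t * ((1 - t) * K) \<le> t * (Dr \<theta>star - Dr \<theta>)" by (simp add: algebra_simps)
    then show ?thesis using t by simp
  qed
  have KG: "K \<le> Dr \<theta>star - Dr \<theta>"
  proof (rule ccontr)
    assume "\<not> ?thesis"
    then have lt: "Dr \<theta>star - Dr \<theta> < K" by simp
    have "Dr \<theta> \<le> Dr \<theta>star" using assms(6) assms(9) dth0 dths by fastforce
    then have Kpos: "K > 0" using lt by simp
    define t where "t = (K - (Dr \<theta>star - Dr \<theta>)) / (2 * K)"
    have t: "0 < t" "t < 1" unfolding t_def using lt Kpos \<open>Dr \<theta> \<le> Dr \<theta>star\<close> by (auto simp: field_simps)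
    have "(1 - t) * K = (K + (Dr \<theta>star - Dr \<theta>)) / 2" unfolding t_def using Kpos by (simp add: field_simps)
    then show False using Kt[OF t] lt by simp
  qed
  have "Dr \<theta>star \<le> Pr w" by (rule wd2[OF assms(5) wnn])
  then have KG0: "K \<le> G0" using KG unfolding G0_def by simp
  define r where "r = sqrt (2 * real_of_ereal (gap X u lam w \<theta>) / \<alpha>)"
  have dist: "dist \<theta> \<theta>star \<le> r"
  proof -
    have "(dist \<theta> \<theta>star)^2 \<le> 2 * G0 / \<alpha>"
      using KG0 apos unfolding K_def dist_norm by (simp add: field_simps)
    then show ?thesis unfolding r_def gapr by (rule real_le_rsqrt)
  qed
  have part2: "wstar $ j = 0" if hj: "max (column j X \<bullet> \<theta>) 0 + r * norm (column j X) < 1" for j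
  proof -
    have "column j X \<bullet> \<theta>star = column j X \<bullet> \<theta> + column j X \<bullet> (\<theta>star - \<theta>)"
      by (simp add: inner_diff_right)
    also have "\<dots> \<le> column j X \<bullet> \<theta> + norm (column j X) * norm (\<theta>star - \<theta>)"
      using norm_cauchy_schwarz by simp
    also have "norm (\<theta>star - \<theta>) = dist \<theta> \<theta>star" by (simp add: dist_norm norm_minus_commute)
    also have "column j X \<bullet> \<theta> + norm (column j X) * dist \<theta> \<theta>star \<le> max (column j X \<bullet> \<theta>) 0 + r * norm (column j X)"
      using dist mult_right_mono[OF dist norm_ge_zero[of "column j X"]]
      by (simp add: mult.commute)
    finally have "vs $ j < 1" using hj unfolding vs_def column_inner by simp
    then show ?thesis using cs[of j] by simp
  qed
  show ?thesis using dist part2 unfolding r_def by simp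
qed

end
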